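(* Let $m,n,k$ be positive integers with $k<n$, $A\in\mathbb{R}^{m\times n}$, $x^*\in\mathbb{R}^n$ with support $S^*$ satisfying $1\le|S^*|\le k$, $e\in\mathbb{R}^m$, $y=Ax^*+e$. Let $\mathcal{X}^0\in\mathbb{R}^n$, $\eta>0$, let $(S^t,x^t,\mathcal{X}^t)_{t\ge0}$ be generated by SEA, $b^t=u^t-\eta A^T(Ax^t-y)$ and $B=\sup_{t\in\mathbb{N}}\|b^t\|_\infty$. Assume $$B<\frac{1}{2\sum_{i\in S^*}\frac{1}{\eta|x^*_i|}},$$ and set $$T'_{max}=\frac{\sum_{i\in S^*}\frac{\max_{j\notin S^*}|\mathcal{X}^0_j|+|\mathcal{X}^0_i|}{\eta|x^*_i|}+k+1}{1-2B\sum_{i\in S^*}\frac{1}{\eta|x^*_i|}},\qquad \tau_i=\frac{\max_{j\notin S^*}|\mathcal{X}^0_j|+|\mathcal{X}^0_i|+2T'_{max}B}{\eta|x^*_i|}\ (i\in S^* ).$$ Then for every $i\in S^*$ and every integer $t\le T'_{max}$, $c^t_i\le\tau_i+1$.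
   Context: $S^*=\{i:x^*_i\neq0\}$. For $v\in\mathbb{R}^n$, $\mathrm{largest}_k(v)$ is the set of indices of the $k$ entries of $v$ with largest absolute value (ties broken by selecting the highest indices). For $S\subseteq\{1,\dots,n\}$, $A_S$ is the submatrix of columns indexed by $S$, $v_S$ the restriction of a vector to $S$, $A_S^\dagger$ the Moore–Penrose pseudoinverse of $A_S$. SEA with initialization $\mathcal{X}^0$ and step size $\eta$ generates, for $t=0,1,2,\dots$: $S^t=\mathrm{largest}_k(\mathcal{X}^t)$; $x^t_i=0$ for $i\notin S^t$ and $x^t_{S^t}=A_{S^t}^\dagger y$; $\mathcal{X}^{t+1}=\mathcal{X}^t-\eta A^T(Ax^t-y)$. The oracle direction is $u^t_i=-\eta x^*_i$ if $i\in S^*\setminus S^t$ and $u^t_i=0$ otherwise. The counts are $c^0_i=0$ and, for $t\ge1$, $c^t_i=|\{t'\in\{0,\dots,t-1\}: i\in S^*\setminus S^{t'}\}|$. *)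

theory Defs
  imports Complex_Main
begin

text \<open>Vectors in R^n are functions nat => real, meaningful on indices 0..n-1
  (paper indices 1..n shifted by one; order preserved). Matrices in R^{m x n}
  are functions nat => nat => real, meaningful on rows < m, columns < n.
  Submatrices are indexed by arbitrary finite index sets.\<close>

definition mm :: "'i set \<Rightarrow> ('a \<Rightarrow> 'i \<Rightarrow> real) \<Rightarrow> ('i \<Rightarrow> 'b \<Rightarrow> real) \<Rightarrow> 'a \<Rightarrow> 'b \<Rightarrow> real" where
  "mm I M N = (\<lambda>a b. \<Sum>c\<in>I. M a c * N c b)"

definition is_pinv :: "'r set \<Rightarrow> 'c set \<Rightarrow> ('r \<Rightarrow> 'c \<Rightarrow> real) \<Rightarrow> ('c \<Rightarrow> 'r \<Rightarrow> real) \<Rightarrow> bool" where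
  "is_pinv R C M P \<longleftrightarrow>
     (\<forall>c a. (c \<notin> C \<or> a \<notin> R) \<longrightarrow> P c a = 0) \<and>
     (\<forall>a\<in>R. \<forall>b\<in>C. mm R (mm C M P) M a b = M a b) \<and>
     (\<forall>c\<in>C. \<forall>a\<in>R. mm C (mm R P M) P c a = P c a) \<and>
     (\<forall>a\<in>R. \<forall>a'\<in>R. mm C M P a a' = mm C M P a' a) \<and>
     (\<forall>c\<in>C. \<forall>c'\<in>C. mm R P M c c' = mm R P M c' c)"

definition pinv :: "'r set \<Rightarrow> 'c set \<Rightarrow> ('r \<Rightarrow> 'c \<Rightarrow> real) \<Rightarrow> ('c \<Rightarrow> 'r \<Rightarrow> real)" where
  "pinv R C M = (THE P. is_pinv R C M P)"

definition largest_k :: "nat \<Rightarrow> nat \<Rightarrow> (nat \<Rightarrow> real) \<Rightarrow> nat set" where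
  "largest_k n k v = (THE S. S \<subseteq> {..<n} \<and> card S = k \<and>
      (\<forall>i\<in>S. \<forall>j\<in>{..<n} - S. \<bar>v j\<bar> < \<bar>v i\<bar> \<or> (\<bar>v j\<bar> = \<bar>v i\<bar> \<and> j < i)))"

definition sea_x :: "nat \<Rightarrow> nat \<Rightarrow> nat \<Rightarrow> (nat \<Rightarrow> nat \<Rightarrow> real) \<Rightarrow> (nat \<Rightarrow> real) \<Rightarrow> (nat \<Rightarrow> real) \<Rightarrow> nat \<Rightarrow> real" where
  "sea_x m n k A y X =
     (let S = largest_k n k X; P = pinv {..<m} S (\<lambda>r j. A r j)
      in (\<lambda>i. if i \<in> S then (\<Sum>r<m. P i r * y r) else 0))"

definition grad :: "nat \<Rightarrow> nat \<Rightarrow> (nat \<Rightarrow> nat \<Rightarrow> real) \<Rightarrow> (nat \<Rightarrow> real) \<Rightarrow> (nat \<Rightarrow> real) \<Rightarrow> nat \<Rightarrow> real" where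
  "grad m n A y x = (\<lambda>i. \<Sum>r<m. A r i * ((\<Sum>j<n. A r j * x j) - y r))"

primrec sea_X :: "nat \<Rightarrow> nat \<Rightarrow> nat \<Rightarrow> (nat \<Rightarrow> nat \<Rightarrow> real) \<Rightarrow> (nat \<Rightarrow> real) \<Rightarrow> (nat \<Rightarrow> real) \<Rightarrow> real \<Rightarrow> nat \<Rightarrow> nat \<Rightarrow> real" where
  "sea_X m n k A y X0 eta 0 = X0"
| "sea_X m n k A y X0 eta (Suc t) =
     (\<lambda>i. sea_X m n k A y X0 eta t i - eta * grad m n A y (sea_x m n k A y (sea_X m n k A y X0 eta t)) i)"

definition sea_S :: "nat \<Rightarrow> nat \<Rightarrow> nat \<Rightarrow> (nat \<Rightarrow> nat \<Rightarrow> real) \<Rightarrow> (nat \<Rightarrow> real) \<Rightarrow> (nat \<Rightarrow> real) \<Rightarrow> real \<Rightarrow> nat \<Rightarrow> nat set" where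
  "sea_S m n k A y X0 eta t = largest_k n k (sea_X m n k A y X0 eta t)"

definition sea_xt :: "nat \<Rightarrow> nat \<Rightarrow> nat \<Rightarrow> (nat \<Rightarrow> nat \<Rightarrow> real) \<Rightarrow> (nat \<Rightarrow> real) \<Rightarrow> (nat \<Rightarrow> real) \<Rightarrow> real \<Rightarrow> nat \<Rightarrow> nat \<Rightarrow> real" where
  "sea_xt m n k A y X0 eta t = sea_x m n k A y (sea_X m n k A y X0 eta t)"

end

theory Submission
  imports Defs
begin

definition lkP :: "nat \<Rightarrow> nat \<Rightarrow> (nat \<Rightarrow> real) \<Rightarrow> nat set \<Rightarrow> bool" where
  "lkP n k v S \<longleftrightarrow> S \<subseteq> {..<n} \<and> card S = k \<and>
      (\<forall>i\<in>S. \<forall>j\<in>{..<n} - S. \<bar>v j\<bar> < \<bar>v i\<bar> \<or> (\<bar>v j\<bar> = \<bar>v i\<bar> \<and> j < i))"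

lemma lk_max:
  fixes R :: "nat set" and v :: "nat \<Rightarrow> real"
  assumes "finite R" "R \<noteq> {}"
  shows "\<exists>i0\<in>R. \<forall>j\<in>R. j = i0 \<or> \<bar>v j\<bar> < \<bar>v i0\<bar> \<or> (\<bar>v j\<bar> = \<bar>v i0\<bar> \<and> j < i0)"
proof -
  define a where "a = Max ((\<lambda>j. \<bar>v j\<bar>) ` R)"
  have aR: "a \<in> (\<lambda>j. \<bar>v j\<bar>) ` R" unfolding a_def using assms by simp
  have age: "\<forall>j\<in>R. \<bar>v j\<bar> \<le> a" unfolding a_def using assms by simp
  define Q where "Q = {j\<in>R. \<bar>v j\<bar> = a}"
  have Qne: "Q \<noteq> {}" "finite Q" using aR assms unfolding Q_def by auto
  define i0 where "i0 = Max Q"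
  have "i0 \<in> Q" unfolding i0_def using Qne by simp
  moreover have "\<forall>j\<in>Q. j \<le> i0" unfolding i0_def using Qne by simp
  ultimately show ?thesis using age unfolding Q_def
    by (metis (mono_tags, lifting) le_neq_implies_less mem_Collect_eq order_le_less)
qed

lemma lk_exists: "k \<le> n \<Longrightarrow> \<exists>S. lkP n k v S"
proof (induction k)
  case 0
  show ?case by (rule exI[of _ "{}"]) (simp add: lkP_def)
next
  case (Suc k)
  then obtain S where S: "lkP n k v S" by auto
  define R where "R = {..<n} - S"
  have fS: "finite S" using S unfolding lkP_def by (meson finite_lessThan finite_subset)
  have "card R = n - k" unfolding R_def using S fS unfolding lkP_def
    by (simp add: card_Diff_subset)
  hence "card R > 0" using Suc.prems by simp
  hence "R \<noteq> {}" "finite R" using card_gt_0_iff by blast+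
  then obtain i0 where i0: "i0 \<in> R" "\<forall>j\<in>R. j = i0 \<or> \<bar>v j\<bar> < \<bar>v i0\<bar> \<or> (\<bar>v j\<bar> = \<bar>v i0\<bar> \<and> j < i0)"
    using lk_max by blast
  have "lkP n (Suc k) v (insert i0 S)"
    using S i0 fS unfolding lkP_def R_def by auto
  thus ?case by blast
qed

lemma lk_unique:
  assumes "lkP n k v S" "lkP n k v S'" shows "S = S'"
proof (rule ccontr)
  assume ne: "S \<noteq> S'"
  have f: "finite S" "finite S'" using assms unfolding lkP_def by (meson finite_lessThan finite_subset)+
  have c: "card S = card S'" using assms unfolding lkP_def by simp
  have "\<not> S \<subseteq> S'" using card_subset_eq[OF f(2) _ c] ne by blast
  then obtain i where i: "i \<in> S" "i \<notin> S'" by blast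
  have "\<not> S' \<subseteq> S" using card_subset_eq[OF f(1) _ c[symmetric]] ne by blast
  then obtain j where j: "j \<in> S'" "j \<notin> S" by blast
  have "i < n" "j < n" using i j assms unfolding lkP_def by auto
  have P1: "\<forall>i\<in>S. \<forall>j\<in>{..<n} - S. \<bar>v j\<bar> < \<bar>v i\<bar> \<or> (\<bar>v j\<bar> = \<bar>v i\<bar> \<and> j < i)"
    using assms(1) unfolding lkP_def by blast
  have P2: "\<forall>i\<in>S'. \<forall>j\<in>{..<n} - S'. \<bar>v j\<bar> < \<bar>v i\<bar> \<or> (\<bar>v j\<bar> = \<bar>v i\<bar> \<and> j < i)"
    using assms(2) unfolding lkP_def by blast
  have "j \<in> {..<n} - S" "i \<in> {..<n} - S'" using i j \<open>i < n\<close> \<open>j < n\<close> by auto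
  hence "\<bar>v j\<bar> < \<bar>v i\<bar> \<or> (\<bar>v j\<bar> = \<bar>v i\<bar> \<and> j < i)"
    "\<bar>v i\<bar> < \<bar>v j\<bar> \<or> (\<bar>v i\<bar> = \<bar>v j\<bar> \<and> i < j)"
    using P1 P2 i j by blast+
  thus False by linarith
qed

lemma largest_k_prop:
  assumes "k \<le> n" shows "lkP n k v (largest_k n k v)"
proof -
  have "\<exists>!S. lkP n k v S" using lk_exists[OF assms] lk_unique by blast
  hence "lkP n k v (THE S. lkP n k v S)" by (rule theI')
  thus ?thesis unfolding largest_k_def lkP_def by simp
qed

theorem propositionC5:
  fixes m n k :: nat and A :: "nat \<Rightarrow> nat \<Rightarrow> real"
    and xs e y X0 :: "nat \<Rightarrow> real" and eta :: real
    and Sstar :: "nat set" and u b :: "nat \<Rightarrow> nat \<Rightarrow> real" and c :: "nat \<Rightarrow> nat \<Rightarrow> nat"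
    and B Tmax :: real and tau :: "nat \<Rightarrow> real"
  assumes "0 < m" "0 < n" "0 < k" "k < n"
    and Sstar_def: "Sstar = {i. i < n \<and> xs i \<noteq> 0}"
    and "1 \<le> card Sstar" "card Sstar \<le> k"
    and y_def: "\<forall>r<m. y r = (\<Sum>j<n. A r j * xs j) + e r"
    and "0 < eta"
    and u_def: "\<forall>t i. u t i = (if i \<in> Sstar - sea_S m n k A y X0 eta t then - eta * xs i else 0)"
    and b_def: "\<forall>t i. b t i = u t i - eta * grad m n A y (sea_xt m n k A y X0 eta t) i"
    and bdd: "bdd_above (range (\<lambda>t. Max ((\<lambda>i. \<bar>b t i\<bar>) ` {..<n})))"
    and B_def: "B = (SUP t. Max ((\<lambda>i. \<bar>b t i\<bar>) ` {..<n}))"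
    and hB: "B < 1 / (2 * (\<Sum>i\<in>Sstar. 1 / (eta * \<bar>xs i\<bar>)))"
    and Tmax_def: "Tmax =
       ((\<Sum>i\<in>Sstar. (Max ((\<lambda>j. \<bar>X0 j\<bar>) ` ({..<n} - Sstar)) + \<bar>X0 i\<bar>) / (eta * \<bar>xs i\<bar>))
          + real k + 1)
       / (1 - 2 * B * (\<Sum>i\<in>Sstar. 1 / (eta * \<bar>xs i\<bar>)))"
    and tau_def: "\<forall>i\<in>Sstar. tau i =
       (Max ((\<lambda>j. \<bar>X0 j\<bar>) ` ({..<n} - Sstar)) + \<bar>X0 i\<bar> + 2 * Tmax * B) / (eta * \<bar>xs i\<bar>)"
    and c_def: "\<forall>t i. c t i = card {t' \<in> {..<t}. i \<in> Sstar - sea_S m n k A y X0 eta t'}"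
  shows "\<forall>i\<in>Sstar. \<forall>t::nat. real t \<le> Tmax \<longrightarrow> real (c t i) \<le> tau i + 1"
proof -
  define X where "X = sea_X m n k A y X0 eta"
  define S where "S = sea_S m n k A y X0 eta"
  define M where "M = Max ((\<lambda>j. \<bar>X0 j\<bar>) ` ({..<n} - Sstar))"
  have fSs: "finite Sstar" unfolding Sstar_def by simp
  have kn: "k \<le> n" using assms(4) by simp
  have step: "X (Suc t) i = X t i + b t i - u t i" for t i
    using b_def unfolding X_def sea_xt_def by simp
  have bB: "\<bar>b t i\<bar> \<le> B" if "i < n" for t i
  proof -
    have "\<bar>b t i\<bar> \<le> Max ((\<lambda>i. \<bar>b t i\<bar>) ` {..<n})" using that by simp
    also have "\<dots> \<le> B" unfolding B_def by (rule cSUP_upper[OF _ bdd]) simp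
    finally show ?thesis .
  qed
  have B0: "0 \<le> B" using bB[of 0 0] assms(2) by simp
  have cS: "c (Suc t) i = c t i + (if i \<in> Sstar - S t then 1 else 0)" for t i
  proof -
    have "{t' \<in> {..<Suc t}. i \<in> Sstar - S t'} =
       (if i \<in> Sstar - S t then insert t {t' \<in> {..<t}. i \<in> Sstar - S t'} else {t' \<in> {..<t}. i \<in> Sstar - S t'})"
      by (auto simp: less_Suc_eq)
    thus ?thesis using c_def unfolding S_def by simp
  qed
  have Xform: "X t i = X0 i + (\<Sum>t'<t. b t' i) + (if i \<in> Sstar then eta * xs i * c t i else 0)" for t i
  proof (induction t)
    case 0
    then show ?case using c_def by (simp add: X_def)
  next
    case (Suc t)
    show ?case using Suc u_def cS[of t i] unfolding S_def by (simp add: step algebra_simps)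
  qed
  have sumb: "\<bar>\<Sum>t'<t. b t' i\<bar> \<le> real t * B" if "i < n" for t i
  proof -
    have "\<bar>\<Sum>t'<t. b t' i\<bar> \<le> (\<Sum>t'<t. \<bar>b t' i\<bar>)" by (rule sum_abs)
    also have "\<dots> \<le> (\<Sum>t'<t. B)" by (rule sum_mono) (use bB that in auto)
    finally show ?thesis by simp
  qed
  have compl_ne: "{..<n} - Sstar \<noteq> {}"
  proof
    assume "{..<n} - Sstar = {}"
    hence "{..<n} \<subseteq> Sstar" by blast
    hence "card {..<n} \<le> card Sstar" using card_mono[OF fSs] by blast
    hence "n \<le> card Sstar" by simp
    thus False using assms(4) assms(7) by linarith
  qed
  have outside: "\<bar>X t j\<bar> \<le> M + real t * B" if "j < n" "j \<notin> Sstar" for t j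
  proof -
    have "\<bar>X t j\<bar> \<le> \<bar>X0 j\<bar> + \<bar>\<Sum>t'<t. b t' j\<bar>" using Xform[of t j] that by simp
    moreover have "\<bar>X0 j\<bar> \<le> M" unfolding M_def using that by simp
    ultimately show ?thesis using sumb[OF that(1), of t] by linarith
  qed
  have inside: "eta * \<bar>xs i\<bar> * c t i - \<bar>X0 i\<bar> - real t * B \<le> \<bar>X t i\<bar>" if "i \<in> Sstar" for t i
  proof -
    have "i < n" using that Sstar_def by simp
    have "\<bar>eta * xs i * c t i\<bar> = eta * \<bar>xs i\<bar> * c t i" using assms(9) by (simp add: abs_mult)
    moreover have "X t i = X0 i + (\<Sum>t'<t. b t' i) + eta * xs i * c t i" using Xform[of t i] that by simp
    ultimately show ?thesis using sumb[OF \<open>i < n\<close>, of t] by (smt (verit))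
  qed
  show ?thesis
  proof (intro ballI allI impI)
    fix i t assume iS: "i \<in> Sstar" and tT: "real t \<le> Tmax"
    have xpos: "0 < eta * \<bar>xs i\<bar>" using iS Sstar_def assms(9) by simp
    have "i < n" using iS Sstar_def by simp
    have T0: "0 \<le> Tmax" using tT by linarith
    obtain j0 where j0: "j0 \<in> {..<n} - Sstar" using compl_ne by blast
    have "\<bar>X0 j0\<bar> \<le> M" unfolding M_def using j0 by simp
    hence Mge: "0 \<le> M" by linarith
    have tau0: "0 \<le> tau i"
    proof -
      have "tau i = (M + \<bar>X0 i\<bar> + 2 * Tmax * B) / (eta * \<bar>xs i\<bar>)" using tau_def iS unfolding M_def by simp
      moreover have "0 \<le> M + \<bar>X0 i\<bar> + 2 * Tmax * B" using T0 B0 Mge by simp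
      ultimately show ?thesis using xpos by simp
    qed
    define P where "P = {t' \<in> {..<t}. i \<in> Sstar - S t'}"
    have cP: "c t' i = card {t'' \<in> {..<t'}. i \<in> Sstar - S t''}" for t' using c_def S_def by simp
    show "real (c t i) \<le> tau i + 1"
    proof (cases "P = {}")
      case True
      have "c t i = card P" using cP[of t] unfolding P_def by simp
      hence "c t i = 0" using True by simp
      then show ?thesis using tau0 by simp
    next
      case False
      have fP: "finite P" unfolding P_def by simp
      define t' where "t' = Max P"
      have t'P: "t' \<in> P" unfolding t'_def using fP False by simp
      have t'max: "\<forall>s\<in>P. s \<le> t'" unfolding t'_def using fP by simp
      have "P = insert t' {t'' \<in> {..<t'}. i \<in> Sstar - S t''}"
        using t'P t'max unfolding P_def by force
      hence ct: "c t i = c t' i + 1" using cP[of t] cP[of t'] P_def by simp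
      have t't: "t' < t" and iout: "i \<notin> S t'" using t'P P_def by auto
      have L: "lkP n k (X t') (S t')" unfolding S_def X_def sea_S_def using largest_k_prop[OF kn] by simp
      have "\<exists>j. j \<in> S t' \<and> j \<notin> Sstar"
      proof (rule ccontr)
        assume "\<not> ?thesis"
        hence "S t' \<subseteq> Sstar - {i}" using iout by blast
        hence "card (S t') \<le> card (Sstar - {i})" using fSs by (simp add: card_mono)
        also have "\<dots> < card Sstar" using iS fSs by (meson card_Diff1_less)
        finally show False using L assms(7) unfolding lkP_def by simp
      qed
      then obtain j where j: "j \<in> S t'" "j \<notin> Sstar" by blast
      have jn: "j < n" using j L unfolding lkP_def by auto
      have "i \<in> {..<n} - S t'" using iout \<open>i < n\<close> by simp
      hence "\<bar>X t' i\<bar> < \<bar>X t' j\<bar> \<or> (\<bar>X t' i\<bar> = \<bar>X t' j\<bar> \<and> i < j)"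
        using L j(1) unfolding lkP_def by blast
      hence "\<bar>X t' i\<bar> \<le> \<bar>X t' j\<bar>" by linarith
      hence "eta * \<bar>xs i\<bar> * c t' i \<le> M + \<bar>X0 i\<bar> + 2 * real t' * B"
        using inside[OF iS, of t'] outside[OF jn j(2), of t'] by linarith
      also have "\<dots> \<le> M + \<bar>X0 i\<bar> + 2 * Tmax * B" using t't tT B0
        by (simp add: mult_right_mono)
      finally have "c t' i \<le> (M + \<bar>X0 i\<bar> + 2 * Tmax * B) / (eta * \<bar>xs i\<bar>)"
        using xpos by (simp add: pos_le_divide_eq mult.commute)
      hence "c t' i \<le> tau i" using tau_def iS unfolding M_def by simp
      thus ?thesis using ct by simp
    qed
  qed
qed

end
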